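(* Let $p\ge1$ and for $0<\alpha\le2$ let $Q(\alpha,p)$ be the infimum of all $q$ with the property: for every $\varepsilon>0$ there is $C_\varepsilon>0$ such that $$\int_{B(0,R)}|\mathcal T^\lambda f|^qH(x)\,dx\le C_\varepsilon A_\alpha(H)R^\varepsilon\|f\|_{L^p}^q$$ for all $\lambda\ge1$, $1\le R\le\lambda$, all $f\in L^p$ supported in $(0,1)$ and all $\alpha$-dimensional weights $H$. Then for $0<\beta<\alpha\le2$, $$\frac{Q(\alpha,p)}{\alpha}\le\frac{Q(\beta,p)}{\beta}.$$
   Context: Let $\phi(x,\xi)$, $x\in\mathbb{R}^2$, $\xi\in\mathbb{R}$, be a real smooth function on a neighborhood of $\overline{B(0,1)}\times[0,1]$ satisfying the Carleson–Sjölin condition: the $2\times2$ matrix with rows $\partial_\xi\nabla_x\phi(x,\xi)$ and $\partial_\xi^2\nabla_x\phi(x,\xi)$ has rank 2 everywhere there. Let $a\in C_c^\infty(B(0,1)\times(0,1))$. For $\lambda\ge1$ put $\phi^\lambda(x,\xi)=\lambda\phi(x/\lambda,\xi)$, $a^\lambda(x,\xi)=a(x/\lambda,\xi)$, and for $f$ supported in $(0,1)$, $\mathcal T^\lambda f(x)=\int e^{i\phi^\lambda(x,\xi)}a^\lambda(x,\xi)f(\xi)\,d\xi$. A measurable $H:\mathbb{R}^2\to[0,1]$ is an $\alpha$-dimensional weight if $A_\alpha(H):=\inf\{C\ge0:\int_{B(x_0,r)}H\,dx\le Cr^\alpha\text{ for all }x_0\in\mathbb{R}^2,\ r\ge1\}<\infty$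 (and $H\not\equiv0$). *)

theory Defs
  imports "HOL-Analysis.Analysis"
begin

fun iter_pd :: "'a::real_normed_vector list \<Rightarrow> ('a \<Rightarrow> 'b::real_normed_vector) \<Rightarrow> 'a \<Rightarrow> 'b" where
  "iter_pd [] f = f"
| "iter_pd (v # vs) f = (\<lambda>z. frechet_derivative (iter_pd vs f) (at z) v)"

definition smooth_on :: "'a::euclidean_space set \<Rightarrow> ('a \<Rightarrow> 'b::real_normed_vector) \<Rightarrow> bool" where
  "smooth_on U f \<longleftrightarrow> (\<forall>vs. set vs \<subseteq> Basis \<longrightarrow> iter_pd vs f differentiable_on U)"

definition e_x :: "2 \<Rightarrow> (real^2) \<times> real" where
  "e_x j = (axis j 1, 0)"

definition e_xi :: "(real^2) \<times> real" where
  "e_xi = (0, 1)"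

text \<open>The 2x2 matrix with rows  d_xi grad_x phi  and  d_xi^2 grad_x phi.\<close>
definition CS_matrix :: "(real^2 \<Rightarrow> real \<Rightarrow> real) \<Rightarrow> real^2 \<Rightarrow> real \<Rightarrow> real^2^2" where
  "CS_matrix phi x xi = (\<chi> i j. if i = 1
      then iter_pd [e_xi, e_x j] (case_prod phi) (x, xi)
      else iter_pd [e_xi, e_xi, e_x j] (case_prod phi) (x, xi))"

definition phase_ok :: "(real^2 \<Rightarrow> real \<Rightarrow> real) \<Rightarrow> bool" where
  "phase_ok phi \<longleftrightarrow>
     (\<exists>U. open U \<and> cball 0 1 \<times> {0..1} \<subseteq> U \<and> smooth_on U (case_prod phi)) \<and>
     (\<forall>x xi. x \<in> cball 0 1 \<and> xi \<in> {0..1} \<longrightarrow> rank (CS_matrix phi x xi) = 2)"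

definition amplitude_ok :: "(real^2 \<Rightarrow> real \<Rightarrow> complex) \<Rightarrow> bool" where
  "amplitude_ok a \<longleftrightarrow> smooth_on UNIV (case_prod a) \<and>
     compact (closure {z. case_prod a z \<noteq> 0}) \<and>
     closure {z. case_prod a z \<noteq> 0} \<subseteq> ball 0 1 \<times> {0<..<1}"

definition T_lam :: "(real^2 \<Rightarrow> real \<Rightarrow> real) \<Rightarrow> (real^2 \<Rightarrow> real \<Rightarrow> complex) \<Rightarrow> real
    \<Rightarrow> (real \<Rightarrow> complex) \<Rightarrow> real^2 \<Rightarrow> complex" where
  "T_lam phi a lam f x = (LINT xi|lborel.
      exp (\<i> * complex_of_real (lam * phi (x /\<^sub>R lam) xi)) * a (x /\<^sub>R lam) xi * f xi)"

definition in_Lp :: "real \<Rightarrow> (real \<Rightarrow> complex) \<Rightarrow> bool" where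
  "in_Lp p f \<longleftrightarrow> f \<in> borel_measurable lborel \<and> integrable lborel (\<lambda>xi. norm (f xi) powr p)"

definition Lp_norm :: "real \<Rightarrow> (real \<Rightarrow> complex) \<Rightarrow> real" where
  "Lp_norm p f = (LINT xi|lborel. norm (f xi) powr p) powr (1 / p)"

definition A_set :: "real \<Rightarrow> (real^2 \<Rightarrow> real) \<Rightarrow> real set" where
  "A_set alpha H = {C. C \<ge> 0 \<and> (\<forall>x0 r. r \<ge> 1 \<longrightarrow>
      (\<integral>\<^sup>+ x \<in> ball x0 r. ennreal (H x) \<partial>lborel) \<le> ennreal (C * r powr alpha))}"

definition A_alpha :: "real \<Rightarrow> (real^2 \<Rightarrow> real) \<Rightarrow> real" where
  "A_alpha alpha H = Inf (A_set alpha H)"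

definition alpha_weight :: "real \<Rightarrow> (real^2 \<Rightarrow> real) \<Rightarrow> bool" where
  "alpha_weight alpha H \<longleftrightarrow> H \<in> borel_measurable lborel \<and> (\<forall>x. 0 \<le> H x \<and> H x \<le> 1) \<and>
     A_set alpha H \<noteq> {} \<and> (\<exists>x. H x \<noteq> 0)"

definition good_q :: "(real^2 \<Rightarrow> real \<Rightarrow> real) \<Rightarrow> (real^2 \<Rightarrow> real \<Rightarrow> complex) \<Rightarrow> real \<Rightarrow> real \<Rightarrow> real \<Rightarrow> bool" where
  "good_q phi a alpha p q \<longleftrightarrow>
     (\<forall>eps>0. \<exists>C>0. \<forall>lam R f H. 1 \<le> lam \<and> 1 \<le> R \<and> R \<le> lam \<and> in_Lp p f \<and>
        (\<forall>xi. xi \<notin> {0<..<1} \<longrightarrow> f xi = 0) \<and> alpha_weight alpha H \<longrightarrow>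
        (\<integral>\<^sup>+ x \<in> ball 0 R. ennreal (norm (T_lam phi a lam f x) powr q * H x) \<partial>lborel)
          \<le> ennreal (C * A_alpha alpha H * R powr eps * Lp_norm p f powr q))"

text \<open>Q(alpha,p), as an extended real (= +infinity if no q works).\<close>
definition Qexp :: "(real^2 \<Rightarrow> real \<Rightarrow> real) \<Rightarrow> (real^2 \<Rightarrow> real \<Rightarrow> complex) \<Rightarrow> real \<Rightarrow> real \<Rightarrow> ereal" where
  "Qexp phi a alpha p = Inf (ereal ` {q. q > 0 \<and> good_q phi a alpha p q})"

end

theory Submission
  imports Defs
begin


lemma young_pt:
  fixes u v s t :: real
  assumes "0 \<le> u" "0 \<le> v" "0 < s" "s < 1" "0 < t"
  shows "u powr (1-s) * v powr s \<le> (1-s)* t* u + s* (t powr (- (1-s) / s))* v"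
proof (cases "u = 0 \<or> v = 0")
  case True
  then show ?thesis using assms by (auto intro!: add_nonneg_nonneg mult_nonneg_nonneg)
next
  case False
  hence up: "u > 0" "v > 0" using assms by auto
  have "(t* u) powr (1-s) * (t powr (- (1-s) / s) * v) powr s \<le> (1-s)* (t* u) + s* (t powr (- (1-s) / s) * v)"
    by (rule Youngs_inequality_0) (use assms up in auto)
  moreover have "(t* u) powr (1-s) * (t powr (- (1-s) / s) * v) powr s = u powr (1-s) * v powr s"
  proof -
    have "(t* u) powr (1-s) * (t powr (- (1-s) / s) * v) powr s
       = (t powr (1-s) * (t powr (- (1-s) / s)) powr s) * (u powr (1-s) * v powr s)"
      using assms up by (simp add: powr_mult)
    also have "t powr (1-s) * (t powr (- (1-s) / s)) powr s = 1"
      using assms by (simp add: powr_powr flip: powr_add)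
    finally show ?thesis by simp
  qed
  ultimately show ?thesis by (simp add: algebra_simps)
qed

lemma pa: fixes U V s :: real assumes "0<U" "0<V"
  shows "(V/U) powr s * U = U powr (1-s) * V powr s"
  by (simp add: assms less_eq_real_def powr_diff powr_divide)
lemma pb: fixes U V s :: real assumes "0<U" "0<V" "0<s"
  shows "((V/U) powr s) powr (- (1-s) / s) * V = U powr (1-s) * V powr s"
proof -
  have "((V/U) powr s) powr (- (1-s) / s) = (V/U) powr (s-1)" using assms powr_powr by auto
  moreover have "(V/U) powr (s-1) * V = U powr (1-s) * V powr s"
    by (smt (verit, best) assms(1,2) divide_neg_neg frac_eq_eq
    minus_divide_divide minus_mult_minus mult.commute pa powr_diff
    powr_eq_0_iff powr_inj powr_one')
  ultimately show ?thesis by simp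
qed

lemma holder_nn:
  fixes u w :: "'a \<Rightarrow> real" and U V s :: real
  assumes um: "u \<in> borel_measurable M" and wm: "w \<in> borel_measurable M"
    and u0: "\<And>x. 0 \<le> u x" and w0: "\<And>x. 0 \<le> w x"
    and s: "0 < s" "s < 1"
    and Ub: "(\<integral>\<^sup>+x. ennreal (u x) \<partial>M) \<le> ennreal U"
    and Vb: "(\<integral>\<^sup>+x. ennreal (w x) \<partial>M) \<le> ennreal V"
    and UV: "0 < U" "0 < V"
  shows "(\<integral>\<^sup>+x. ennreal (u x powr (1-s) * w x powr s) \<partial>M) \<le> ennreal (U powr (1-s) * V powr s)"
proof -
  define t where "t = (V/U) powr s"
  define t' where "t' = t powr (- (1-s) / s)"
  have t0: "t > 0" using UV by (simp add: t_def)
  have t'0: "t' > 0" using t0 by (simp add: t'_def)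
  have "(\<integral>\<^sup>+x. ennreal (u x powr (1-s) * w x powr s) \<partial>M)
      \<le> (\<integral>\<^sup>+x. ennreal ((1-s)*t) * ennreal (u x) + ennreal (s*t') * ennreal (w x) \<partial>M)"
  proof (rule nn_integral_mono)
    fix x
    have "u x powr (1-s) * w x powr s \<le> (1-s)*t*u x + s*t'*w x"
      using young_pt[OF u0 w0 s t0] by (simp add: t'_def)
    then have h: "u x powr (1-s) * w x powr s \<le> ((1-s)*t)*u x + (s*t')*w x" by simp
    show "ennreal (u x powr (1-s) * w x powr s) \<le> ennreal ((1-s)*t) * ennreal (u x) + ennreal (s*t') * ennreal (w x)"
      using s t0 t'0 u0[of x] w0[of x] h
      by (simp add: ennreal_mult[symmetric] ennreal_plus[symmetric] del: ennreal_plus)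
  qed
  also have "\<dots> = ennreal ((1-s)*t) * (\<integral>\<^sup>+x. ennreal (u x) \<partial>M) + ennreal (s*t') * (\<integral>\<^sup>+x. ennreal (w x) \<partial>M)"
    using um wm by (simp add: nn_integral_add nn_integral_cmult)
  also have "\<dots> \<le> ennreal ((1-s)*t) * ennreal U + ennreal (s*t') * ennreal V"
    by (intro add_mono mult_left_mono Ub Vb) auto
  also have "\<dots> = ennreal ((1-s)*t*U + s*t'*V)"
    using s t0 t'0 UV by (subst ennreal_plus) (auto simp: ennreal_mult)
  also have "(1-s)*t*U + s*t'*V = U powr (1-s) * V powr s"
  proof -
    have a: "t*U = U powr (1-s) * V powr s"
      using pa[OF UV] by (simp add: t_def)
    have b: "t'*V = U powr (1-s) * V powr s"
      using pb[OF UV s(1)] by (simp add: t'_def t_def)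
    show ?thesis using a b by (simp add: algebra_simps)
  qed
  finally show ?thesis .
qed



lemma phase_cont:
  assumes "phase_ok phi"
  obtains U where "open U" "cball 0 1 \<times> {0..1} \<subseteq> U" "continuous_on U (case_prod phi)"
proof -
  obtain U where U: "open U" "cball 0 1 \<times> {0..1} \<subseteq> U" "smooth_on U (case_prod phi)"
    using assms unfolding phase_ok_def by blast
  have "iter_pd [] (case_prod phi) differentiable_on U"
    using U(3) unfolding smooth_on_def by (drule_tac x="[]" in spec) simp
  hence "continuous_on U (case_prod phi)"
    by (simp add: differentiable_imp_continuous_on)
  thus ?thesis using that U by blast
qed

lemma amp_cont:
  assumes "amplitude_ok a"
  shows "continuous_on UNIV (case_prod a)"
proof -
  have "iter_pd [] (case_prod a) differentiable_on UNIV"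
    using assms unfolding smooth_on_def amplitude_ok_def by (drule_tac x="[]" in spec[OF conjunct1]) simp
  thus ?thesis by (simp add: differentiable_imp_continuous_on)
qed

lemma amp_bound:
  assumes "amplitude_ok a"
  obtains Ma where "Ma > 0" "\<And>x xi. norm (a x xi) \<le> Ma"
proof -
  let ?K = "closure {z. case_prod a z \<noteq> 0}"
  have K: "compact ?K" using assms unfolding amplitude_ok_def by blast
  have "compact (case_prod a ` ?K)"
    by (rule compact_continuous_image[OF continuous_on_subset[OF amp_cont[OF assms] subset_UNIV] K])
  hence "bounded (case_prod a ` ?K)" by (rule compact_imp_bounded)
  then obtain B where B0: "\<forall>y \<in> case_prod a ` ?K. norm y \<le> B"
    unfolding bounded_iff by blast
  have B: "\<And>y. y \<in> case_prod a ` ?K \<Longrightarrow> norm y \<le> B" using B0 by blast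
  have nb: "norm (a x xi) \<le> max B 1" for x xi
  proof (cases "(x, xi) \<in> ?K")
    case True
    have "norm (case_prod a (x,xi)) \<le> B" by (rule B[OF imageI[OF True]])
    then show ?thesis by (simp add: le_max_iff_disj)
  next
    case False
    have "(x,xi) \<notin> {z. case_prod a z \<noteq> 0}"
    proof
      assume "(x,xi) \<in> {z. case_prod a z \<noteq> 0}"
      hence "(x,xi) \<in> ?K" by (rule subsetD[OF closure_subset])
      thus False using False by contradiction
    qed
    hence "a x xi = 0" by simp
    then show ?thesis by simp
  qed
  show ?thesis by (rule that[of "max B 1"]) (simp_all add: nb)
qed

definition Ig :: "(real^2 \<Rightarrow> real \<Rightarrow> real) \<Rightarrow> (real^2 \<Rightarrow> real \<Rightarrow> complex) \<Rightarrow> real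
    \<Rightarrow> (real \<Rightarrow> complex) \<Rightarrow> real^2 \<Rightarrow> real \<Rightarrow> complex" where
  "Ig phi a lam f x xi = indicator (ball 0 lam \<times> {0<..<1}) (x, xi) *\<^sub>R
     (exp (\<i> * complex_of_real (lam * phi (x /\<^sub>R lam) xi)) * a (x /\<^sub>R lam) xi) * f xi"

lemma Ig_meas:
  assumes "phase_ok phi" "amplitude_ok a" "lam > 0" and fm: "f \<in> borel_measurable borel"
  shows "(\<lambda>z. Ig phi a lam f (fst z) (snd z)) \<in> borel_measurable borel"
proof -
  obtain U where U: "open U" "cball 0 1 \<times> {0..1} \<subseteq> U" "continuous_on U (case_prod phi)"
    using phase_cont[OF assms(1)] by blast
  let ?S = "ball (0::real^2) lam \<times> {0<..<(1::real)}"
  let ?h = "\<lambda>z::((real^2) \<times> real). (fst z /\<^sub>R lam, snd z)"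
  have hS: "?h ` ?S \<subseteq> U"
  proof
    fix y assume "y \<in> ?h ` ?S"
    then obtain x xi where xs: "(x,xi) \<in> ?S" and yy: "y = ?h (x,xi)" by auto
    hence "y = (x /\<^sub>R lam, xi)" "norm x < lam" "0 < xi" "xi < 1" by auto
    moreover have "norm (x /\<^sub>R lam) \<le> 1" using \<open>norm x < lam\<close> assms(3) by (simp add: field_simps)
    ultimately show "y \<in> U" using U(2) by auto
  qed
  have hc: "continuous_on ?S ?h" by (intro continuous_intros)
  have c1: "continuous_on ?S (\<lambda>z. case_prod phi (?h z))"
    by (rule continuous_on_compose2[OF U(3) hc hS])
  have c2: "continuous_on ?S (\<lambda>z. case_prod a (?h z))"
    by (rule continuous_on_compose2[OF amp_cont[OF assms(2)] hc]) auto
  have c: "continuous_on ?S (\<lambda>z. exp (\<i> * complex_of_real (lam * case_prod phi (?h z))) * case_prod a (?h z))"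
    by (intro continuous_intros c1 c2)
  have m1: "(\<lambda>z. indicator ?S z *\<^sub>R (exp (\<i> * complex_of_real (lam * case_prod phi (?h z))) * case_prod a (?h z))) \<in> borel_measurable borel"
    by (rule borel_measurable_continuous_on_indicator[OF _ c]) (simp add: open_Times)
  have m2: "(\<lambda>z::((real^2) \<times> real). f (snd z)) \<in> borel_measurable borel"
    using measurable_compose[OF borel_measurable_continuous_onI[OF continuous_on_snd[OF continuous_on_id]] fm]
    by (simp add: o_def)
  have eq: "(\<lambda>z. Ig phi a lam f (fst z) (snd z)) = (\<lambda>z. (indicator ?S z *\<^sub>R (exp (\<i> * complex_of_real (lam * case_prod phi (?h z))) * case_prod a (?h z))) * f (snd z))"
    by (auto simp: Ig_def fun_eq_iff split: prod.splits)
  have m3: "(\<lambda>z. (indicator ?S z *\<^sub>R (exp (\<i> * complex_of_real (lam * case_prod phi (?h z))) * case_prod a (?h z))) * f (snd z)) \<in> borel_measurable borel"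
    by (rule borel_measurable_times[OF m1 m2])
  show ?thesis using m3 by (simp only: eq)
qed

lemma sets_lborel_pair: "sets (lborel \<Otimes>\<^sub>M lborel) = sets (borel :: ('a::euclidean_space \<times> 'b::euclidean_space) measure)"
  by (metis borel_prod sets_lborel sets_pair_measure_cong)

lemma Tm_meas:
  assumes "phase_ok phi" "amplitude_ok a" "lam > 0" and fm: "f \<in> borel_measurable borel"
  shows "(\<lambda>x. LINT xi|lborel. Ig phi a lam f x xi) \<in> borel_measurable lborel"
proof -
  have "(\<lambda>z. Ig phi a lam f (fst z) (snd z)) \<in> borel_measurable (lborel \<Otimes>\<^sub>M lborel)"
    unfolding measurable_cong_sets[OF sets_lborel_pair refl] by (rule Ig_meas[OF assms])
  hence "case_prod (Ig phi a lam f) \<in> borel_measurable (lborel \<Otimes>\<^sub>M lborel)"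
    by (simp add: case_prod_beta')
  thus ?thesis by (rule lborel.borel_measurable_lebesgue_integral)
qed

lemma T_eq:
  assumes "x \<in> ball 0 lam" "\<forall>xi. xi \<notin> {0<..<1} \<longrightarrow> f xi = 0"
  shows "T_lam phi a lam f x = (LINT xi|lborel. Ig phi a lam f x xi)"
  unfolding T_lam_def
  by (rule Bochner_Integration.integral_cong) (use assms in \<open>auto simp: Ig_def indicator_def\<close>)

lemma f_le: fixes y p :: real assumes "p \<ge> 1" "y \<ge> 0" shows "y \<le> 1 + y powr p"
proof (cases "y \<le> 1")
  case True then show ?thesis using assms by (simp add: add_increasing2)
next
  case False
  hence "y powr 1 \<le> y powr p" using assms by (intro powr_mono) auto
  then show ?thesis using False by simp
qed

lemma T_bound:
  assumes ph: "phase_ok phi" and am: "amplitude_ok a" and lam: "lam > 0" and fL: "in_Lp p f"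
    and p: "p \<ge> 1" and fs: "\<forall>xi. xi \<notin> {0<..<1} \<longrightarrow> f xi = 0"
  obtains Mb where "Mb > 0" "\<And>x. x \<in> ball 0 lam \<Longrightarrow> norm (T_lam phi a lam f x) \<le> Mb"
proof -
  obtain Ma where Ma: "Ma > 0" "\<And>x xi. norm (a x xi) \<le> Ma" using amp_bound[OF am] by blast
  have fm: "f \<in> borel_measurable borel" using fL by (simp add: in_Lp_def)
  define h where "h xi = Ma * (indicator {0<..<1::real} xi + norm (f xi) powr p)" for xi
  have hi: "integrable lborel h"
    unfolding h_def using fL by (intro integrable_mult_right Bochner_Integration.integrable_add)
      (auto simp: in_Lp_def)
  have bnd: "norm (T_lam phi a lam f x) \<le> LINT xi|lborel. h xi" if x: "x \<in> ball 0 lam" for x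
  proof -
    have gm: "Ig phi a lam f x \<in> borel_measurable borel"
    proof -
      have "(\<lambda>xi::real. (x, xi)) \<in> borel_measurable borel"
        by (rule borel_measurable_continuous_onI) (intro continuous_intros)
      from measurable_compose[OF this Ig_meas[OF ph am lam fm]] show ?thesis by simp
    qed
    have nb: "norm (Ig phi a lam f x xi) \<le> h xi" for xi
    proof (cases "xi \<in> {0<..<1}")
      case True
      have "norm (Ig phi a lam f x xi) = norm (a (x /\<^sub>R lam) xi) * norm (f xi)"
        using True x by (simp add: Ig_def norm_mult)
      also have "\<dots> \<le> Ma * (1 + norm (f xi) powr p)"
        using Ma(1) by (intro mult_mono Ma(2) f_le p) auto
      finally show ?thesis using True by (simp add: h_def)
    next
      case False
      then show ?thesis using Ma(1) by (simp add: Ig_def h_def)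
    qed
    have gi: "integrable lborel (Ig phi a lam f x)"
      by (rule Bochner_Integration.integrable_bound[OF hi]) (use gm nb in \<open>auto intro!: AE_I2 order_trans[OF nb] abs_ge_self\<close>)
    have "norm (T_lam phi a lam f x) = norm (LINT xi|lborel. Ig phi a lam f x xi)"
      using T_eq[OF x fs] by simp
    also have "\<dots> \<le> LINT xi|lborel. h xi"
      by (rule Bochner_Integration.integral_norm_bound_integral[OF gi hi nb])
    finally show ?thesis .
  qed
  have "0 \<le> LINT xi|lborel. h xi"
    by (rule Bochner_Integration.integral_nonneg) (use Ma in \<open>auto simp: h_def\<close>)
  show ?thesis
  proof (rule that[of "(LINT xi|lborel. h xi) + 1"])
    show "0 < (LINT xi|lborel. h xi) + 1" using \<open>0 \<le> LINT xi|lborel. h xi\<close> by simp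
    fix x :: "real^2" assume "x \<in> ball 0 lam"
    from bnd[OF this] show "norm (T_lam phi a lam f x) \<le> (LINT xi|lborel. h xi) + 1" by simp
  qed
qed



lemma pow_ident:
  fixes H t s Q :: real
  assumes "0 \<le> H" "0 \<le> t" "0 < s" "s < 1"
  shows "H powr (1-s) * (t powr Q * H) powr s = H * t powr (Q * s)"
proof (cases "H = 0")
  case True then show ?thesis using assms by simp
next
  case False
  hence Hp: "H > 0" using assms by simp
  have "(t powr Q * H) powr s = (t powr Q) powr s * H powr s"
    using assms by (simp add: powr_mult)
  also have "(t powr Q) powr s = t powr (Q * s)" by (simp add: powr_powr)
  finally have "H powr (1-s) * (t powr Q * H) powr s = (H powr (1-s) * H powr s) * t powr (Q * s)"
    by (simp add: algebra_simps)
  also have "H powr (1-s) * H powr s = H" using Hp by (simp flip: powr_add)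
  finally show ?thesis .
qed

lemma Aset_up:
  assumes "A \<in> A_set al H" "0 \<le> d"
  shows "A + d \<in> A_set al H"
  unfolding A_set_def
proof (intro CollectI conjI allI impI)
  show "0 \<le> A + d" using assms unfolding A_set_def by auto
  fix x0 :: "real^2" and r :: real assume r: "1 \<le> r"
  have "(\<integral>\<^sup>+ x \<in> ball x0 r. ennreal (H x) \<partial>lborel) \<le> ennreal (A * r powr al)"
    using assms r unfolding A_set_def by auto
  also have "\<dots> \<le> ennreal ((A + d) * r powr al)"
    using assms by (intro ennreal_leI mult_right_mono) auto
  finally show "(\<integral>\<^sup>+ x \<in> ball x0 r. ennreal (H x) \<partial>lborel) \<le> ennreal ((A + d) * r powr al)" .
qed

lemma Aset_Inf_le:
  assumes "B \<in> A_set al H"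
  shows "A_alpha al H \<le> B"
  unfolding A_alpha_def
  by (rule cInf_lower[OF assms]) (auto simp: bdd_below_def A_set_def)

lemma final_alg:
  fixes Ir C A R L q al be eps :: real
  assumes Ir: "Ir > 0" and C: "C > 0" and A: "A > 0" and R: "R \<ge> 1" and L: "L \<ge> 0"
    and ab: "0 < be" "be < al" and eps: "eps > 0"
    and h: "Ir \<le> C * A powr (be/al) * Ir powr (1 - be/al) * R powr (eps*be/al) * L powr q"
  shows "Ir \<le> C powr (al/be) * A * R powr eps * L powr (q*al/be)"
proof -
  define Z where "Z = C * A powr (be/al) * R powr (eps*be/al) * L powr q"
  have Z0: "Z \<ge> 0" unfolding Z_def using C by simp
  have "Ir powr (be/al) * Ir powr (1 - be/al) = Ir" using Ir by (simp flip: powr_add)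
  hence "Ir powr (be/al) * Ir powr (1 - be/al) \<le> Z * Ir powr (1 - be/al)"
    using h by (simp add: Z_def algebra_simps)
  hence h2: "Ir powr (be/al) \<le> Z" using Ir by simp
  have "Ir = (Ir powr (be/al)) powr (al/be)" using ab Ir by (simp add: powr_powr)
  also have "\<dots> \<le> Z powr (al/be)"
    using h2 ab Ir by (intro powr_mono2) auto
  also have "Z powr (al/be) = C powr (al/be) * (A powr (be/al)) powr (al/be) * (R powr (eps*be/al)) powr (al/be) * (L powr q) powr (al/be)"
    unfolding Z_def using C A R L by (simp add: powr_mult)
  also have "\<dots> = C powr (al/be) * A * R powr eps * L powr (q*al/be)"
    using ab A by (simp add: powr_powr)
  finally show ?thesis .
qed

lemma key_bound:
  assumes ph: "phase_ok phi" and am: "amplitude_ok a" and p: "p \<ge> 1"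
    and ab: "0 < be" "be < al" and q: "q > 0" and eps: "eps > 0" and C: "C > 0"
    and CH: "\<forall>lam R f H. 1 \<le> lam \<and> 1 \<le> R \<and> R \<le> lam \<and> in_Lp p f \<and>
        (\<forall>xi. xi \<notin> {0<..<1} \<longrightarrow> f xi = 0) \<and> alpha_weight be H \<longrightarrow>
        (\<integral>\<^sup>+ x \<in> ball 0 R. ennreal (norm (T_lam phi a lam f x) powr q * H x) \<partial>lborel)
          \<le> ennreal (C * A_alpha be H * R powr (eps * be / al) * Lp_norm p f powr q)"
    and lam: "1 \<le> lam" and R: "1 \<le> R" "R \<le> lam" and fL: "in_Lp p f"
    and fs: "\<forall>xi. xi \<notin> {0<..<1} \<longrightarrow> f xi = 0" and Hw: "alpha_weight al H"
  shows "(\<integral>\<^sup>+ x \<in> ball 0 R. ennreal (norm (T_lam phi a lam f x) powr (q * al / be) * H x) \<partial>lborel)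
          \<le> ennreal (C powr (al / be) * A_alpha al H * R powr eps * Lp_norm p f powr (q * al / be))"
proof -
  define Q where "Q = q * al / be"
  define s where "s = 1 - be / al"
  define e where "e = Q - q"
  have al0: "al > 0" using ab by simp
  have s: "0 < s" "s < 1" using ab by (auto simp: s_def field_simps)
  have Qs: "Q * s = e" unfolding Q_def s_def e_def using ab by (simp add: field_simps)
  have Q0: "Q > 0" using q ab by (simp add: Q_def)
  have e0: "e > 0" unfolding e_def Q_def using q ab by (simp add: field_simps)
  have lam0: "lam > 0" using lam by simp
  have Hm: "H \<in> borel_measurable borel" and H01: "\<And>x. 0 \<le> H x \<and> H x \<le> 1"
    and Hne: "A_set al H \<noteq> {}" using Hw unfolding alpha_weight_def by auto
  have fm: "f \<in> borel_measurable borel" using fL by (simp add: in_Lp_def)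
  define T where "T x = T_lam phi a lam f x" for x
  define Tm where "Tm x = (LINT xi|lborel. Ig phi a lam f x xi)" for x
  have Tmm: "Tm \<in> borel_measurable borel" unfolding Tm_def using Tm_meas[OF ph am lam0 fm] by simp
  have TTm: "T x = Tm x" if "x \<in> ball 0 R" for x
    unfolding T_def Tm_def using R that by (intro T_eq[OF _ fs]) auto
  obtain Mb where Mb: "Mb > 0" "\<And>x. x \<in> ball 0 lam \<Longrightarrow> norm (T x) \<le> Mb"
    using T_bound[OF ph am lam0 fL p fs] unfolding T_def by blast
  have MbR: "norm (Tm x) \<le> Mb" if "x \<in> ball 0 R" for x
    using Mb(2)[of x] TTm[OF that] R that by auto
  define v where "v x = indicator (ball 0 R) x * (norm (Tm x) powr Q * H x)" for x
  have vm: "v \<in> borel_measurable borel"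
  proof -
    note [measurable] = Tmm Hm
    have [measurable]: "ball (0::real^2) R \<in> sets borel" by simp
    show ?thesis unfolding v_def by measurable
  qed
  have v0: "v x \<ge> 0" for x unfolding v_def using H01[of x] by simp
  define I where "I = (\<integral>\<^sup>+ x \<in> ball 0 R. ennreal (norm (T x) powr Q * H x) \<partial>lborel)"
  have Iv: "I = (\<integral>\<^sup>+ x. ennreal (v x) \<partial>lborel)"
    unfolding I_def v_def by (rule nn_integral_cong) (auto simp: TTm split: split_indicator)
  have Ifin: "I < \<infinity>"
  proof -
    have "I \<le> (\<integral>\<^sup>+ x. ennreal (Mb powr Q) * indicator (ball (0::real^2) R) x \<partial>lborel)"
      unfolding Iv v_def
    proof (rule nn_integral_mono)
      fix x
      show "ennreal (indicator (ball 0 R) x * (norm (Tm x) powr Q * H x)) \<le> ennreal (Mb powr Q) * indicator (ball 0 R) x"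
      proof (cases "x \<in> ball 0 R")
        case True
        have "norm (Tm x) powr Q * H x \<le> Mb powr Q * 1"
          using H01[of x] MbR[OF True] Q0 by (intro mult_mono powr_mono2) auto
        then show ?thesis using True by (simp add: ennreal_leI)
      qed simp
    qed
    also have "\<dots> = ennreal (Mb powr Q) * emeasure lborel (ball (0::real^2) R)"
      by (rule nn_integral_cmult_indicator) simp
    also have "\<dots> < \<infinity>"
      using emeasure_bounded_finite[of "ball (0::real^2) R"] by (simp add: ennreal_mult_less_top)
    finally show ?thesis .
  qed
  show ?thesis
  proof (cases "I = 0")
    case True then show ?thesis unfolding I_def T_def Q_def by simp
  next
    case False
    define Ir where "Ir = enn2real I"
    have IIr: "I = ennreal Ir" using Ifin by (simp add: Ir_def)
    have Ir0: "Ir > 0"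
    proof -
      have "Ir \<ge> 0" by (simp add: Ir_def)
      moreover have "Ir \<noteq> 0" using False IIr by auto
      ultimately show ?thesis by simp
    qed
    define K where "K = Mb powr e"
    have K0: "K > 0" using Mb(1) by (simp add: K_def)
    define G where "G x = indicator (ball 0 R) x * H x * norm (Tm x) powr e / K" for x
    have Gm: "G \<in> borel_measurable borel"
    proof -
      note [measurable] = Tmm Hm
      have [measurable]: "ball (0::real^2) R \<in> sets borel" by simp
      show ?thesis unfolding G_def by measurable
    qed
    have G01: "0 \<le> G x \<and> G x \<le> 1" for x
    proof (cases "x \<in> ball 0 R")
      case True
      have "norm (Tm x) powr e \<le> K" unfolding K_def using MbR[OF True] e0 by (intro powr_mono2) auto
      hence "H x * norm (Tm x) powr e \<le> 1 * K" using H01[of x] K0 by (intro mult_mono) auto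
      then show ?thesis using True H01[of x] K0 by (simp add: G_def)
    qed (simp add: G_def)
    have GT: "norm (T x) powr q * G x = v x / K" if x: "x \<in> ball 0 R" for x
    proof -
      have "norm (T x) powr q * G x = H x * (norm (Tm x) powr q * norm (Tm x) powr e) / K"
        using x by (simp add: G_def TTm[OF x])
      also have "norm (Tm x) powr q * norm (Tm x) powr e = norm (Tm x) powr Q"
        by (simp add: e_def flip: powr_add)
      finally show ?thesis using x by (simp add: v_def)
    qed
    have Gne: "\<exists>x. G x \<noteq> 0"
    proof (rule ccontr)
      assume "\<not> (\<exists>x. G x \<noteq> 0)"
      hence G0: "G x = 0" for x by simp
      have "v x = 0" for x
      proof (cases "x \<in> ball 0 R")
        case True
        from GT[OF True] G0[of x] K0 show ?thesis by simp
      qed (simp add: v_def)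
      hence "I = 0" unfolding Iv by simp
      thus False using False by simp
    qed
    have mainA: "Ir \<le> C powr (al/be) * A * R powr eps * Lp_norm p f powr Q"
      if A: "A \<in> A_set al H" "A > 0" for A
    proof -
      define Bg where "Bg = A powr (be/al) * Ir powr s / K"
      have BgA: "Bg \<in> A_set be G"
        unfolding A_set_def
      proof (intro CollectI conjI allI impI)
        show "0 \<le> Bg" using K0 by (simp add: Bg_def)
        fix x0 :: "real^2" and r :: real assume r: "1 \<le> r"
        define u where "u x = indicator (ball x0 r) x * H x" for x
        have um: "u \<in> borel_measurable borel"
        proof -
          note [measurable] = Hm
          have [measurable]: "ball x0 r \<in> sets borel" by simp
          show ?thesis unfolding u_def by measurable
        qed
        have u0: "u x \<ge> 0" for x unfolding u_def using H01[of x] by simp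
        have "(\<integral>\<^sup>+ x \<in> ball x0 r. ennreal (H x) \<partial>lborel) \<le> ennreal (A * r powr al)"
          using A(1) r unfolding A_set_def by auto
        moreover have "(\<integral>\<^sup>+x. ennreal (u x) \<partial>lborel) = (\<integral>\<^sup>+ x \<in> ball x0 r. ennreal (H x) \<partial>lborel)"
          unfolding u_def by (rule nn_integral_cong) (auto split: split_indicator)
        ultimately have Ub: "(\<integral>\<^sup>+x. ennreal (u x) \<partial>lborel) \<le> ennreal (A * r powr al)" by simp
        have Vb: "(\<integral>\<^sup>+x. ennreal (v x) \<partial>lborel) \<le> ennreal Ir" using Iv IIr by simp
        have pos: "0 < A * r powr al" using A(2) r by simp
        have hol: "(\<integral>\<^sup>+x. ennreal (u x powr (1-s) * v x powr s) \<partial>lborel) \<le> ennreal ((A * r powr al) powr (1-s) * Ir powr s)"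
        proof -
          have um': "u \<in> borel_measurable lborel" and vm': "v \<in> borel_measurable lborel" using um vm by simp_all
          show ?thesis by (rule holder_nn[OF um' vm' u0 v0 s Ub Vb pos Ir0])
        qed
        have pt: "ennreal (G x) * indicator (ball x0 r) x = ennreal (1/K) * ennreal (u x powr (1-s) * v x powr s)" for x
        proof (cases "x \<in> ball x0 r \<and> x \<in> ball 0 R")
          case True
          have "u x powr (1-s) * v x powr s = H x powr (1-s) * (norm (Tm x) powr Q * H x) powr s"
            using True by (simp add: u_def v_def)
          also have "\<dots> = H x * norm (Tm x) powr e"
            using pow_ident[of "H x" "norm (Tm x)" s Q] H01[of x] s Qs by simp
          finally have "u x powr (1-s) * v x powr s = H x * norm (Tm x) powr e" .
          moreover have "G x = H x * norm (Tm x) powr e / K" using True by (simp add: G_def)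
          ultimately show ?thesis using True K0 H01[of x]
            by (simp add: ennreal_mult[symmetric] divide_inverse mult.commute)
        next
          case False
          hence "u x = 0 \<or> v x = 0" by (auto simp: u_def v_def)
          hence z1: "u x powr (1-s) * v x powr s = 0" using s by auto
          have z2: "ennreal (G x) * indicator (ball x0 r) x = 0"
            using False by (auto simp: G_def)
          show ?thesis by (simp only: z1 z2 ennreal_0 mult_zero_right)
        qed
        have "(\<integral>\<^sup>+ x \<in> ball x0 r. ennreal (G x) \<partial>lborel) = (\<integral>\<^sup>+ x. ennreal (1/K) * ennreal (u x powr (1-s) * v x powr s) \<partial>lborel)"
          by (simp only: pt)
        also have "\<dots> = ennreal (1/K) * (\<integral>\<^sup>+x. ennreal (u x powr (1-s) * v x powr s) \<partial>lborel)"
        proof (rule nn_integral_cmult)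
          note [measurable] = um vm
          show "(\<lambda>x. ennreal (u x powr (1-s) * v x powr s)) \<in> borel_measurable lborel" by measurable
        qed
        also have "\<dots> \<le> ennreal (1/K) * ennreal ((A * r powr al) powr (1-s) * Ir powr s)"
          by (rule mult_left_mono[OF hol]) simp
        also have "\<dots> = ennreal (Bg * r powr be)"
        proof -
          have "(A * r powr al) powr (1-s) = A powr (be/al) * r powr be"
            using A(2) r al0 by (simp add: s_def powr_mult powr_powr)
          hence "(1/K) * ((A * r powr al) powr (1-s) * Ir powr s) = Bg * r powr be"
            by (simp add: Bg_def)
          thus ?thesis using K0 by (simp flip: ennreal_mult)
        qed
        finally show "(\<integral>\<^sup>+ x \<in> ball x0 r. ennreal (G x) \<partial>lborel) \<le> ennreal (Bg * r powr be)" .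
      qed
      have AG: "A_alpha be G \<le> Bg" by (rule Aset_Inf_le[OF BgA])
      have AG0: "0 \<le> A_alpha be G"
        unfolding A_alpha_def using BgA by (intro cInf_greatest) (auto simp: A_set_def)
      have Gw: "alpha_weight be G" unfolding alpha_weight_def using Gm G01 BgA Gne by auto
      have ineq: "(\<integral>\<^sup>+ x \<in> ball 0 R. ennreal (norm (T x) powr q * G x) \<partial>lborel)
          \<le> ennreal (C * A_alpha be G * R powr (eps * be / al) * Lp_norm p f powr q)"
        using CH lam R fL fs Gw unfolding T_def by blast
      have lhs: "(\<integral>\<^sup>+ x \<in> ball 0 R. ennreal (norm (T x) powr q * G x) \<partial>lborel) = ennreal (1/K) * I"
      proof -
        have "(\<integral>\<^sup>+ x \<in> ball 0 R. ennreal (norm (T x) powr q * G x) \<partial>lborel) = (\<integral>\<^sup>+ x. ennreal (1/K) * ennreal (v x) \<partial>lborel)"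
        proof (rule nn_integral_cong)
          fix x :: "real^2"
          show "ennreal (norm (T x) powr q * G x) * indicator (ball 0 R) x = ennreal (1/K) * ennreal (v x)"
          proof (cases "x \<in> ball 0 R")
            case True
            then show ?thesis using GT[OF True] K0 v0[of x]
              by (simp add: ennreal_mult[symmetric] divide_inverse mult.commute)
          qed (simp add: v_def)
        qed
        also have "\<dots> = ennreal (1/K) * I" unfolding Iv using vm by (simp add: nn_integral_cmult)
        finally show ?thesis .
      qed
      have "ennreal (Ir / K) \<le> ennreal (C * A_alpha be G * R powr (eps * be / al) * Lp_norm p f powr q)"
      proof -
        have "ennreal (Ir / K) = ennreal (1/K) * ennreal Ir"
          using Ir0 K0 by (subst ennreal_mult[symmetric]) auto
        also have "\<dots> = (\<integral>\<^sup>+ x \<in> ball 0 R. ennreal (norm (T x) powr q * G x) \<partial>lborel)"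
          using lhs IIr by simp
        finally show ?thesis using ineq by simp
      qed
      hence "Ir / K \<le> C * A_alpha be G * R powr (eps * be / al) * Lp_norm p f powr q"
      proof -
        have "Ir / K > 0" using Ir0 K0 by simp
        thus ?thesis using \<open>ennreal (Ir / K) \<le> _\<close> unfolding ennreal_le_iff2 by linarith
      qed
      also have "\<dots> \<le> C * Bg * R powr (eps * be / al) * Lp_norm p f powr q"
        using AG C by (intro mult_right_mono) auto
      finally have "Ir / K \<le> C * Bg * R powr (eps * be / al) * Lp_norm p f powr q" .
      hence "Ir \<le> C * A powr (be/al) * Ir powr (1 - be/al) * R powr (eps * be / al) * Lp_norm p f powr q"
        using K0 by (simp add: Bg_def s_def field_simps)
      thus ?thesis unfolding Q_def
        by (rule final_alg[OF Ir0 C A(2) R(1) _ ab eps, rotated]) (simp add: Lp_norm_def)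
    qed
    define c where "c = C powr (al/be) * R powr eps * Lp_norm p f powr Q"
    have c0: "c \<ge> 0" by (simp add: c_def)
    have allA: "Ir \<le> c * A" if A: "A \<in> A_set al H" for A
    proof (rule field_le_epsilon)
      fix d :: real assume d: "d > 0"
      have A0: "A \<ge> 0" using A by (simp add: A_set_def)
      define d' where "d' = d / (c + 1)"
      have d': "d' > 0" using d c0 by (simp add: d'_def)
      have "Ir \<le> C powr (al/be) * (A + d') * R powr eps * Lp_norm p f powr Q"
        using mainA[OF Aset_up[OF A] ] d' A0 by simp
      also have "\<dots> = c * A + c * d'" by (simp add: c_def algebra_simps)
      also have "c * d' \<le> d" using c0 d by (simp add: d'_def field_simps)
      finally show "Ir \<le> c * A + d" by simp
    qed
    have "Ir \<le> c * A_alpha al H"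
    proof (cases "c = 0")
      case True
      obtain A where "A \<in> A_set al H" using Hne by blast
      from allA[OF this] True Ir0 show ?thesis by simp
    next
      case False
      hence cp: "c > 0" using c0 by simp
      have "Ir / c \<le> A_alpha al H"
        unfolding A_alpha_def using Hne allA cp by (intro cInf_greatest) (auto simp: field_simps mult.commute)
      thus ?thesis using cp by (simp add: field_simps mult.commute)
    qed
    hence "I \<le> ennreal (c * A_alpha al H)" using IIr by (simp add: ennreal_leI)
    thus ?thesis unfolding I_def T_def Q_def c_def by (simp add: algebra_simps)
  qed
qed

lemma key:
  assumes ph: "phase_ok phi" and am: "amplitude_ok a" and p: "p \<ge> 1"
    and ab: "0 < be" "be < al" and q: "q > 0" and gq: "good_q phi a be p q"
  shows "good_q phi a al p (q * al / be)"
  unfolding good_q_def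
proof (intro allI impI)
  fix eps :: real assume eps: "eps > 0"
  have eps1: "eps * be / al > 0" using eps ab by simp
  have "\<exists>C>0. \<forall>lam R f H. 1 \<le> lam \<and> 1 \<le> R \<and> R \<le> lam \<and> in_Lp p f \<and>
        (\<forall>xi. xi \<notin> {0<..<1} \<longrightarrow> f xi = 0) \<and> alpha_weight be H \<longrightarrow>
        (\<integral>\<^sup>+ x \<in> ball 0 R. ennreal (norm (T_lam phi a lam f x) powr q * H x) \<partial>lborel)
          \<le> ennreal (C * A_alpha be H * R powr (eps * be / al) * Lp_norm p f powr q)"
    using gq eps1 unfolding good_q_def by blast
  then obtain C where C: "C > 0" and CH: "\<forall>lam R f H. 1 \<le> lam \<and> 1 \<le> R \<and> R \<le> lam \<and> in_Lp p f \<and>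
        (\<forall>xi. xi \<notin> {0<..<1} \<longrightarrow> f xi = 0) \<and> alpha_weight be H \<longrightarrow>
        (\<integral>\<^sup>+ x \<in> ball 0 R. ennreal (norm (T_lam phi a lam f x) powr q * H x) \<partial>lborel)
          \<le> ennreal (C * A_alpha be H * R powr (eps * be / al) * Lp_norm p f powr q)"
    by blast
  show "\<exists>C>0. \<forall>lam R f H. 1 \<le> lam \<and> 1 \<le> R \<and> R \<le> lam \<and> in_Lp p f \<and>
        (\<forall>xi. xi \<notin> {0<..<1} \<longrightarrow> f xi = 0) \<and> alpha_weight al H \<longrightarrow>
        (\<integral>\<^sup>+ x \<in> ball 0 R. ennreal (norm (T_lam phi a lam f x) powr (q * al / be) * H x) \<partial>lborel)
          \<le> ennreal (C * A_alpha al H * R powr eps * Lp_norm p f powr (q * al / be))"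
  proof (intro exI[of _ "C powr (al / be)"] conjI allI impI)
    show "C powr (al / be) > 0" using C by simp
    fix lam R :: real and f :: "real \<Rightarrow> complex" and H :: "real^2 \<Rightarrow> real"
    assume h: "1 \<le> lam \<and> 1 \<le> R \<and> R \<le> lam \<and> in_Lp p f \<and>
        (\<forall>xi. xi \<notin> {0<..<1} \<longrightarrow> f xi = 0) \<and> alpha_weight al H"
    show "(\<integral>\<^sup>+ x \<in> ball 0 R. ennreal (norm (T_lam phi a lam f x) powr (q * al / be) * H x) \<partial>lborel)
          \<le> ennreal (C powr (al / be) * A_alpha al H * R powr eps * Lp_norm p f powr (q * al / be))"
      using h by (intro key_bound[OF ph am p ab q eps C CH]) auto
  qed
qed

theorem mainTheorem8:
  fixes phi :: "real^2 \<Rightarrow> real \<Rightarrow> real" and a :: "real^2 \<Rightarrow> real \<Rightarrow> complex"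
    and p alpha beta :: real
  assumes "phase_ok phi" and "amplitude_ok a" and "p \<ge> 1"
    and "0 < beta" and "beta < alpha" and "alpha \<le> 2"
  shows "Qexp phi a alpha p / ereal alpha \<le> Qexp phi a beta p / ereal beta"
proof -
  have al0: "alpha > 0" using assms by simp
  have "ereal beta * (Qexp phi a alpha p / ereal alpha) \<le> Qexp phi a beta p"
    unfolding Qexp_def[of phi a beta p]
  proof (rule Inf_greatest)
    fix z assume "z \<in> ereal ` {q. q > 0 \<and> good_q phi a beta p q}"
    then obtain y where y: "y > 0" "good_q phi a beta p y" and z: "z = ereal y" by auto
    have "good_q phi a alpha p (y * alpha / beta)"
      by (rule key[OF assms(1,2,3,4,5) y(1,2)])
    moreover have "y * alpha / beta > 0" using y assms by simp
    ultimately have "Qexp phi a alpha p \<le> ereal (y * alpha / beta)"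
      unfolding Qexp_def by (intro Inf_lower) auto
    hence "Qexp phi a alpha p / ereal alpha \<le> ereal (y * alpha / beta) / ereal alpha"
      by (rule ereal_divide_right_mono) (use al0 in simp)
    also have "\<dots> = ereal (y / beta)" using al0 by simp
    finally have "ereal beta * (Qexp phi a alpha p / ereal alpha) \<le> ereal beta * ereal (y / beta)"
      using assms by (intro ereal_mult_left_mono) auto
    also have "\<dots> = z" using assms z by simp
    finally show "ereal beta * (Qexp phi a alpha p / ereal alpha) \<le> z" .
  qed
  thus ?thesis using assms by (subst ereal_le_divide_pos) auto
qed


end
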